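(* Let $m,n\ge 1$ and let $A\in\{0,1\}^{m\times n}$ have exactly three ones in each row. If $\operatorname{conv}(\mathrm{NPadj}(A))$ is not a line segment (equivalently, $\mathrm{NPadj}(A)$ has more than two points), then there is no finite simple graph $G$ with $\mathrm{NPadj}(A)\le_a \mathrm{Stable}(G)$. In other words, $\operatorname{conv}(\mathrm{NPadj}(A))$ is not affinely equivalent to any face of $\operatorname{conv}(\mathrm{Stable}(G))$, for any graph $G$.
   Context: Polytopes are identified with their vertex sets; every 0/1 set $X$ is the vertex set of $\operatorname{conv}(X)$. **Definition of $\mathrm{NPadj}(A)$.** Let $m,n\ge1$ and let $A\in\{0,1\}^{m\times n}$ have exactly three ones in each row. Index the coordinates of $\mathbb{R}^{3n+3}$ by $y_1,y_2,y_3$ and by $x_j,\bar x_j,x'_j$ for $j\in[n]=\{1,\dots,n\}$. Then $\mathrm{NPadj}(A)$ is the set of vectors in $\{0,1\}^{3n+3}$ satisfying: - $x_j+\bar x_j=1$ for all $j\in[n]$; - $y_1+y_2+x'_j+\bar x_j=2$ for all $j\in[n]$; - for each row of $A$, with ones in columns $i<j<k$, the equation $y_3+x_i+x'_j+x'_k=2$. **Graph polytope.** For a graph $G=(V,E)$, $\mathrm{Stable}(G)=\{x\in\{0,1\}^V : x_u+x_v\le 1 \text{ for every edge } \{u,v\}\in E\}$. **Affine reduction of polytopes.** For finite sets $P,Q$ of 0/1 vectors, $P\le_a Q$ means: there is an affine map $\alpha$ defined on $\operatorname{conv}(P)$, injective there, such that $\alpha(\operatorname{conv}(P))$ is a face (possibly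 improper) of $\operatorname{conv}(Q)$. *)

theory Defs
  imports "HOL-Analysis.Analysis"
begin

text \<open>Coordinates of R^(3n+3): y1,y2,y3 and x_j, xbar_j, x'_j for each column j.\<close>
datatype 'n npc = Y1 | Y2 | Y3 | X 'n | Xb 'n | Xp 'n

instance npc :: (finite) finite
proof
  have eq: "(UNIV :: 'a npc set) = {Y1, Y2, Y3} \<union> range X \<union> range Xb \<union> range Xp"
    by (auto intro: npc.exhaust)
  have fin: "finite ({Y1, Y2, Y3} \<union> range X \<union> range Xb \<union> range Xp :: 'a npc set)"
    by simp
  show "finite (UNIV :: 'a npc set)" using eq fin by metis
qed

definition three_ones :: "real^'n^'m \<Rightarrow> bool" where
  "three_ones A \<longleftrightarrow> (\<forall>r i. A$r$i \<in> {0,1}) \<and> (\<forall>r. card {j. A$r$j = 1} = 3)"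

definition NPadj :: "real^('n::{finite,linorder})^('m::finite) \<Rightarrow> (real^('n npc)) set" where
  "NPadj A = {v. (\<forall>c. v$c \<in> {0,1})
     \<and> (\<forall>j. v$X j + v$Xb j = 1)
     \<and> (\<forall>j. v$Y1 + v$Y2 + v$Xp j + v$Xb j = 2)
     \<and> (\<forall>r i j k. i < j \<and> j < k \<and> A$r$i = 1 \<and> A$r$j = 1 \<and> A$r$k = 1
            \<longrightarrow> v$Y3 + v$X i + v$Xp j + v$Xp k = 2)}"

definition simple_graph :: "('v \<Rightarrow> 'v \<Rightarrow> bool) \<Rightarrow> bool" where
  "simple_graph E \<longleftrightarrow> (\<forall>u v. E u v \<longrightarrow> E v u) \<and> (\<forall>u. \<not> E u u)"

definition Stable :: "('v::finite \<Rightarrow> 'v \<Rightarrow> bool) \<Rightarrow> (real^'v) set" where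
  "Stable E = {x. (\<forall>v. x$v \<in> {0,1}) \<and> (\<forall>u v. E u v \<longrightarrow> x$u + x$v \<le> 1)}"

definition aff_red :: "'a::euclidean_space set \<Rightarrow> 'b::euclidean_space set \<Rightarrow> bool" where
  "aff_red P Q \<longleftrightarrow> (\<exists>L b. linear L \<and> inj_on (\<lambda>x. L x + b) (convex hull P)
       \<and> ((\<lambda>x. L x + b) ` (convex hull P)) face_of (convex hull Q))"

end

theory Submission imports Defs begin

lemma zo_extreme:
  fixes T :: "(real^'k) set"
  assumes "\<forall>x\<in>T. \<forall>i. x$i \<in> {0,1}" "z \<in> T"
  shows "z extreme_point_of (convex hull T)"
proof -
  have sub: "convex hull T \<subseteq> cbox 0 1"
  proof (rule hull_minimal)
    show "T \<subseteq> cbox 0 1"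
    proof
      fix x assume "x \<in> T"
      then have h: "\<And>i. x$i = 0 \<or> x$i = 1" using assms(1) by auto
      show "x \<in> cbox 0 1" unfolding mem_box_cart
      proof
        fix i show "(0::real^'k)$i \<le> x$i \<and> x$i \<le> (1::real^'k)$i" using h[of i] by auto
      qed
    qed
  qed simp
  have "z \<notin> open_segment a b" if "a \<in> convex hull T" "b \<in> convex hull T" for a b
  proof
    assume "z \<in> open_segment a b"
    then obtain u where ab: "a \<noteq> b" "0 < u" "u < 1" "z = (1 - u) *\<^sub>R a + u *\<^sub>R b"
      by (auto simp: in_segment)
    then obtain i where i: "a$i \<noteq> b$i" using vec_eq_iff[of a b] by blast
    have a01: "0 \<le> a$i" "a$i \<le> 1" "0 \<le> b$i" "b$i \<le> 1"
      using subsetD[OF sub that(1)] subsetD[OF sub that(2)] unfolding mem_box_cart by auto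
    have zi: "z$i = (1-u) * a$i + u * b$i" using ab(4) by simp
    have "z$i \<in> {0,1}" using assms by auto
    moreover have "(1-u) * a$i \<ge> 0" "u * b$i \<ge> 0"
      using a01 ab by (intro mult_nonneg_nonneg; linarith)+
    moreover have "(1-u) * (1 - a$i) \<ge> 0" "u * (1 - b$i) \<ge> 0"
      using a01 ab by (intro mult_nonneg_nonneg; linarith)+
    have id: "(1-u) * (1 - a$i) + u * (1 - b$i) = 1 - z$i" using zi by (simp add: algebra_simps)
    have u0: "u \<noteq> 0" "1 - u \<noteq> 0" using ab by auto
    show False
    proof (cases "z$i = 0")
      case True
      then have "(1-u) * a$i = 0" "u * b$i = 0" using zi \<open>(1-u) * a$i \<ge> 0\<close> \<open>u * b$i \<ge> 0\<close> by linarith+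
      then have "a$i = 0" "b$i = 0" using u0 by auto
      then show False using i by simp
    next
      case False
      then have "z$i = 1" using \<open>z$i \<in> {0,1}\<close> by auto
      then have "(1-u) * (1 - a$i) = 0" "u * (1 - b$i) = 0"
        using id \<open>(1-u) * (1 - a$i) \<ge> 0\<close> \<open>u * (1 - b$i) \<ge> 0\<close> by linarith+
      then have "a$i = 1" "b$i = 1" using u0 by auto
      then show False using i by simp
    qed
  qed
  then show ?thesis using assms(2) hull_inc[of z T] by (auto simp: extreme_point_of_def)
qed

lemma aff_seg:
  assumes "linear L"
  shows "L ((1 - u) *\<^sub>R a + u *\<^sub>R b) + d = (1 - u) *\<^sub>R (L a + d) + u *\<^sub>R (L b + d)"
proof -
  have "L ((1 - u) *\<^sub>R a + u *\<^sub>R b) = (1 - u) *\<^sub>R L a + u *\<^sub>R L b"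
    by (simp only: linear_add[OF assms] linear_scale[OF assms])
  then show ?thesis by (simp add: algebra_simps)
qed

lemma aff_ext:
  assumes L: "linear L" and inj: "inj_on (\<lambda>x. L x + d) S" and cv: "convex S" and p: "p \<in> S"
  shows "p extreme_point_of S \<longleftrightarrow> (L p + d) extreme_point_of ((\<lambda>x. L x + d) ` S)"
proof
  assume e: "p extreme_point_of S"
  show "(L p + d) extreme_point_of ((\<lambda>x. L x + d) ` S)"
    unfolding extreme_point_of_def
  proof (intro conjI ballI)
    show "L p + d \<in> (\<lambda>x. L x + d) ` S" using p by auto
    fix a' b' assume "a' \<in> (\<lambda>x. L x + d) ` S" "b' \<in> (\<lambda>x. L x + d) ` S"
    then obtain a b where a: "a \<in> S" "a' = L a + d" and b: "b \<in> S" "b' = L b + d" by auto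
    show "L p + d \<notin> open_segment a' b'"
    proof
      assume "L p + d \<in> open_segment a' b'"
      then obtain u where u: "a' \<noteq> b'" "0 < u" "u < 1" "L p + d = (1 - u) *\<^sub>R a' + u *\<^sub>R b'"
        by (auto simp: in_segment)
      have m: "(1 - u) *\<^sub>R a + u *\<^sub>R b \<in> S" using cv a b u by (simp add: convex_alt)
      have "L p + d = L ((1 - u) *\<^sub>R a + u *\<^sub>R b) + d" using u a b aff_seg[OF L] by simp
      from inj_onD[OF inj this p m] have "p = (1 - u) *\<^sub>R a + u *\<^sub>R b" .
      moreover have "a \<noteq> b" using u a b by auto
      ultimately have "p \<in> open_segment a b" using u by (auto simp: in_segment)
      then show False using e a b by (auto simp: extreme_point_of_def)
    qed
  qed
next
  assume e: "(L p + d) extreme_point_of ((\<lambda>x. L x + d) ` S)"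
  show "p extreme_point_of S"
    unfolding extreme_point_of_def
  proof (intro conjI ballI)
    show "p \<in> S" by fact
    fix a b assume a: "a \<in> S" and b: "b \<in> S"
    show "p \<notin> open_segment a b"
    proof
      assume "p \<in> open_segment a b"
      then obtain u where u: "a \<noteq> b" "0 < u" "u < 1" "p = (1 - u) *\<^sub>R a + u *\<^sub>R b"
        by (auto simp: in_segment)
      have "L a + d \<noteq> L b + d" using inj_onD[OF inj _ a b] u by auto
      then have "L p + d \<in> open_segment (L a + d) (L b + d)"
        using u aff_seg[OF L] by (auto simp: in_segment)
      then show False using e a b by (auto simp: extreme_point_of_def)
    qed
  qed
qed

lemma four_dvd:
  assumes "finite XX" "\<forall>x\<in>XX. g x \<in> XX" "\<forall>x\<in>XX. h x \<in> XX" "\<forall>x\<in>XX. g (g x) = x"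
    "\<forall>x\<in>XX. h (h x) = x" "\<forall>x\<in>XX. g (h x) = h (g x)" "\<forall>x\<in>XX. g x \<noteq> x"
    "\<forall>x\<in>XX. h x \<noteq> x" "\<forall>x\<in>XX. g (h x) \<noteq> x"
  shows "4 dvd card XX"
  using assms
proof (induction "card XX" arbitrary: XX rule: less_induct)
  case less
  show ?case
  proof (cases "XX = {}")
    case True then show ?thesis by simp
  next
    case False
    then obtain x where x: "x \<in> XX" by auto
    define Orb where "Orb = {x, g x, h x, g (h x)}"
    have OrbX: "Orb \<subseteq> XX" using less.prems x by (auto simp: Orb_def)
    have d1: "g x \<noteq> x" "h x \<noteq> x" "g (h x) \<noteq> x" using less.prems x by auto
    have gg: "g (g x) = x" and hh: "h (h x) = x" and gh: "g (h x) = h (g x)"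
      and hx: "h x \<in> XX" using less.prems x by auto
    have ghne: "g (h x) \<noteq> h x" using less.prems hx by blast
    have d2: "g x \<noteq> h x"
    proof
      assume "g x = h x" then have "g (h x) = x" using gg by simp
      then show False using d1 by simp
    qed
    have d3: "g x \<noteq> g (h x)"
    proof
      assume "g x = g (h x)" then have "g (g x) = g (g (h x))" by simp
      moreover have "g (g (h x)) = h x" using less.prems hx by blast
      ultimately show False using gg d1 by simp
    qed
    have d4: "h x \<noteq> g (h x)" using ghne by simp
    have cO: "card Orb = 4" unfolding Orb_def using d1 d2 d3 d4 by auto
    have gO: "\<forall>y\<in>Orb. g y \<in> Orb" "\<forall>y\<in>Orb. h y \<in> Orb" using less.prems x unfolding Orb_def by auto
    let ?Y = "XX - Orb"
    have fY: "finite ?Y" using less.prems by auto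
    have cY: "card ?Y = card XX - 4" using cO OrbX less.prems(1) by (simp add: card_Diff_subset finite_subset)
    have c4: "card XX \<ge> 4" using cO OrbX less.prems(1) card_mono by metis
    have lt: "card ?Y < card XX" using cY c4 by linarith
    have "\<forall>y\<in>?Y. g y \<in> ?Y"
    proof
      fix y assume y: "y \<in> ?Y"
      show "g y \<in> ?Y"
      proof
        show "g y \<in> XX" using y less.prems by auto
        show "g y \<notin> Orb"
        proof
          assume "g y \<in> Orb"
          then have "g (g y) \<in> Orb" using gO by auto
          then show False using y less.prems by auto
        qed
      qed
    qed
    moreover have "\<forall>y\<in>?Y. h y \<in> ?Y"
    proof
      fix y assume y: "y \<in> ?Y"
      show "h y \<in> ?Y"
      proof
        show "h y \<in> XX" using y less.prems by auto
        show "h y \<notin> Orb"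
        proof
          assume "h y \<in> Orb"
          then have "h (h y) \<in> Orb" using gO by auto
          then show False using y less.prems by auto
        qed
      qed
    qed
    ultimately have "4 dvd card ?Y" using less.hyps[OF lt fY] less.prems by auto
    moreover have "card XX = card ?Y + 4" using cY c4 by linarith
    ultimately show ?thesis by simp
  qed
qed


lemma finite_zo: "finite {v::real^'k. \<forall>c. v$c \<in> {0,1}}"
proof -
  have "{v::real^'k. \<forall>c. v$c \<in> {0,1}} \<subseteq> (\<lambda>f. \<chi> c. f c) ` (PiE UNIV (\<lambda>_. {0::real,1}))"
  proof
    fix v :: "real^'k" assume "v \<in> {v. \<forall>c. v$c \<in> {0,1}}"
    then have "(\<lambda>c. v$c) \<in> PiE UNIV (\<lambda>_. {0::real,1})" by auto
    moreover have "v = (\<chi> c. v$c)" by simp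
    ultimately show "v \<in> (\<lambda>f. \<chi> c. f c) ` (PiE UNIV (\<lambda>_. {0::real,1}))" by blast
  qed
  moreover have "finite (PiE (UNIV::'k set) (\<lambda>_. {0::real,1}))" by (simp add: finite_PiE)
  ultimately show ?thesis by (meson finite_imageI finite_subset)
qed

definition p0 :: "real^(('n::finite) npc)" where
  "p0 = (\<chi> c. case c of Y1 \<Rightarrow> 0 | Y2 \<Rightarrow> 0 | Y3 \<Rightarrow> 0 | X j \<Rightarrow> 0 | Xb j \<Rightarrow> 1 | Xp j \<Rightarrow> 1)"

definition kap :: "real^('k::finite) \<Rightarrow> real^'k" where "kap v = (\<chi> i. 1 - v$i)"

definition swp :: "real^(('n::finite) npc) \<Rightarrow> real^('n npc)" where
  "swp v = (\<chi> c. case c of Y1 \<Rightarrow> v$Y2 | Y2 \<Rightarrow> v$Y1 | Y3 \<Rightarrow> v$Y3 | X j \<Rightarrow> v$X j | Xb j \<Rightarrow> v$Xb j | Xp j \<Rightarrow> v$Xp j)"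

lemma kap_nth [simp]: "kap v $ i = 1 - v$i" by (simp add: kap_def)
lemma swp_nth [simp]: "swp v $ Y1 = v$Y2" "swp v $ Y2 = v$Y1" "swp v $ Y3 = v$Y3"
  "swp v $ X j = v$X j" "swp v $ Xb j = v$Xb j" "swp v $ Xp j = v$Xp j" by (simp_all add: swp_def)
lemma p0_nth [simp]: "p0 $ Y1 = 0" "p0 $ Y2 = 0" "p0 $ Y3 = 0"
  "p0 $ X j = 0" "p0 $ Xb j = 1" "p0 $ Xp j = 1" by (simp_all add: p0_def)

lemma NP_zo: "v \<in> NPadj A \<Longrightarrow> v$c = 0 \<or> v$c = 1" by (auto simp: NPadj_def)

lemma kap_NP: "v \<in> NPadj A \<Longrightarrow> kap v \<in> NPadj A"
proof -
  assume v: "v \<in> NPadj A"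
  have "\<forall>c. kap v $ c \<in> {0,1}"
  proof
    fix c show "kap v $ c \<in> {0,1}" using NP_zo[OF v, of c] by auto
  qed
  moreover have "\<forall>j. kap v $ X j + kap v $ Xb j = 1"
  proof
    fix j have "v$X j + v$Xb j = 1" using v unfolding NPadj_def by blast
    then show "kap v $ X j + kap v $ Xb j = 1" by simp
  qed
  moreover have "\<forall>j. kap v $ Y1 + kap v $ Y2 + kap v $ Xp j + kap v $ Xb j = 2"
  proof
    fix j have "v $ Y1 + v $ Y2 + v $ Xp j + v $ Xb j = 2" using v unfolding NPadj_def by blast
    then show "kap v $ Y1 + kap v $ Y2 + kap v $ Xp j + kap v $ Xb j = 2" by simp
  qed
  moreover have "\<forall>r i j k. i < j \<and> j < k \<and> A$r$i = 1 \<and> A$r$j = 1 \<and> A$r$k = 1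
            \<longrightarrow> kap v $ Y3 + kap v $ X i + kap v $ Xp j + kap v $ Xp k = 2"
  proof (intro allI impI)
    fix r i j k assume h: "i < j \<and> j < k \<and> A$r$i = 1 \<and> A$r$j = 1 \<and> A$r$k = 1"
    have "v $ Y3 + v $ X i + v $ Xp j + v $ Xp k = 2" using v h unfolding NPadj_def by blast
    then show "kap v $ Y3 + kap v $ X i + kap v $ Xp j + kap v $ Xp k = 2" by simp
  qed
  ultimately show ?thesis unfolding NPadj_def by blast
qed

lemma swp_NP: "v \<in> NPadj A \<Longrightarrow> swp v \<in> NPadj A"
proof -
  assume v: "v \<in> NPadj A"
  have "\<forall>c. swp v $ c \<in> {0,1}"
  proof
    fix c show "swp v $ c \<in> {0,1}" using v by (cases c) (auto simp: NPadj_def)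
  qed
  moreover have "\<forall>j. swp v $ X j + swp v $ Xb j = 1" using v unfolding NPadj_def by auto
  moreover have "\<forall>j. swp v $ Y1 + swp v $ Y2 + swp v $ Xp j + swp v $ Xb j = 2"
    using v unfolding NPadj_def by (auto simp: algebra_simps)
  moreover have "\<forall>r i j k. i < j \<and> j < k \<and> A$r$i = 1 \<and> A$r$j = 1 \<and> A$r$k = 1
            \<longrightarrow> swp v $ Y3 + swp v $ X i + swp v $ Xp j + swp v $ Xp k = 2"
    using v unfolding NPadj_def by (simp only: swp_nth) blast
  ultimately show ?thesis unfolding NPadj_def by blast
qed

lemma p0_NP: "p0 \<in> NPadj A"
proof -
  have "\<forall>c. p0 $ c \<in> {0,1}"
  proof
    fix c show "p0 $ c \<in> {0,1}" by (cases c) auto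
  qed
  then show ?thesis unfolding NPadj_def by auto
qed

lemma row_exists:
  fixes A :: "real^('n::{finite,linorder})^('m::finite)"
  assumes "three_ones A"
  shows "\<exists>r i j k. i < j \<and> j < k \<and> A$r$i = 1 \<and> A$r$j = 1 \<and> A$r$k = 1"
proof -
  define r :: 'm where "r = undefined"
  have "card {j. A$r$j = 1} = 3" using assms by (auto simp: three_ones_def)
  then obtain x y z where xyz: "{j. A$r$j = 1} = {x,y,z}" "x \<noteq> y" "y \<noteq> z" "x \<noteq> z"
    by (auto simp: card_3_iff)
  then have h: "A$r$x = 1" "A$r$y = 1" "A$r$z = 1" by auto
  have "\<exists>i j k. i < j \<and> j < k \<and> i \<in> {x,y,z} \<and> j \<in> {x,y,z} \<and> k \<in> {x,y,z}"
    using xyz(2-4)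
    by (cases x y rule: linorder_cases; cases y z rule: linorder_cases; cases x z rule: linorder_cases; blast)
  then show ?thesis using h by blast
qed

lemma NP_class:
  fixes A :: "real^('n::{finite,linorder})^('m::finite)"
  assumes "three_ones A" "v \<in> NPadj A" "v$Y1 + v$Y2 \<noteq> 1"
  shows "v = p0 \<or> v = kap p0"
proof -
  obtain r i j k where r: "i < j" "j < k" "A$r$i = 1" "A$r$j = 1" "A$r$k = 1"
    using row_exists[OF assms(1)] by blast
  have zo: "\<And>c. v$c = 0 \<or> v$c = 1" using assms(2) NP_zo by blast
  have e1: "\<And>j. v$X j + v$Xb j = 1" and e2: "\<And>j. v$Y1 + v$Y2 + v$Xp j + v$Xb j = 2"
    and e3: "v$Y3 + v$X i + v$Xp j + v$Xp k = 2"
    using assms(2) r unfolding NPadj_def by auto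
  have "v$Y1 = 0 \<and> v$Y2 = 0 \<or> v$Y1 = 1 \<and> v$Y2 = 1" using zo[of Y1] zo[of Y2] assms(3) by auto
  then show ?thesis
  proof
    assume h: "v$Y1 = 0 \<and> v$Y2 = 0"
    have hx: "\<And>j. v$Xp j = 1 \<and> v$Xb j = 1 \<and> v$X j = 0"
    proof -
      fix j
      show "v$Xp j = 1 \<and> v$Xb j = 1 \<and> v$X j = 0"
        using e2[of j] e1[of j] h zo[of "Xp j"] zo[of "Xb j"] zo[of "X j"] by auto
    qed
    have "v$Y3 = 0" using e3 hx[of i] hx[of j] hx[of k] by auto
    then have "\<forall>c. v$c = p0 $ c"
    proof (intro allI)
      fix c assume "v$Y3 = 0" then show "v$c = p0 $ c" using h hx by (cases c) auto
    qed
    then have "v = p0" by (simp add: vec_eq_iff)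
    then show ?thesis by simp
  next
    assume h: "v$Y1 = 1 \<and> v$Y2 = 1"
    have hx: "\<And>j. v$Xp j = 0 \<and> v$Xb j = 0 \<and> v$X j = 1"
    proof -
      fix j
      show "v$Xp j = 0 \<and> v$Xb j = 0 \<and> v$X j = 1"
        using e2[of j] e1[of j] h zo[of "Xp j"] zo[of "Xb j"] zo[of "X j"] by auto
    qed
    have "v$Y3 = 1" using e3 hx[of i] hx[of j] hx[of k] by auto
    then have "\<forall>c. v$c = kap p0 $ c"
    proof (intro allI)
      fix c assume "v$Y3 = 1" then show "v$c = kap p0 $ c" using h hx by (cases c) auto
    qed
    then have "v = kap p0" by (simp add: vec_eq_iff)
    then show ?thesis by simp
  qed
qed

lemma card_NP:
  fixes A :: "real^('n::{finite,linorder})^('m::finite)"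
  assumes "three_ones A"
  defines "R \<equiv> {v \<in> NPadj A. v$Y1 + v$Y2 = 1}"
  shows "card (NPadj A) = card R + 2" "4 dvd card R" "finite (NPadj A)"
proof -
  have finN: "finite (NPadj A)"
    by (rule finite_subset[OF _ finite_zo]) (auto simp: NPadj_def)
  then show "finite (NPadj A)" .
  have eq: "NPadj A = R \<union> {p0, kap p0}"
    using NP_class[OF assms(1)] p0_NP kap_NP[OF p0_NP] unfolding R_def by auto
  have disj: "R \<inter> {p0, kap p0} = {}" unfolding R_def by auto
  have ne: "p0 \<noteq> kap (p0 :: real^('n npc))"
  proof -
    have "p0 $ (Y1::'n npc) \<noteq> kap p0 $ Y1" by simp
    then show ?thesis by metis
  qed
  have finR: "finite R" using finN unfolding R_def by auto
  show "card (NPadj A) = card R + 2"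
    using eq disj ne finR by (simp add: card_Un_disjoint)
  show "4 dvd card R"
  proof (rule four_dvd[where g = kap and h = swp])
    show "finite R" by fact
    show "\<forall>x\<in>R. kap x \<in> R" unfolding R_def using kap_NP by auto
    show "\<forall>x\<in>R. swp x \<in> R" unfolding R_def using swp_NP by auto
    show "\<forall>x\<in>R. kap (kap x) = x" by (simp add: vec_eq_iff)
    show "\<forall>x\<in>R. swp (swp x) = x"
    proof (intro ballI)
      fix x :: "real^('n npc)" show "swp (swp x) = x" unfolding vec_eq_iff
      proof
        fix c show "swp (swp x) $ c = x $ c" by (cases c) auto
      qed
    qed
    show "\<forall>x\<in>R. kap (swp x) = swp (kap x)"
    proof (intro ballI)
      fix x :: "real^('n npc)" show "kap (swp x) = swp (kap x)" unfolding vec_eq_iff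
      proof
        fix c show "kap (swp x) $ c = swp (kap x) $ c" by (cases c) auto
      qed
    qed
    show "\<forall>x\<in>R. kap x \<noteq> x"
    proof
      fix x assume x: "x \<in> R"
      show "kap x \<noteq> x"
      proof
        assume "kap x = x" then have "kap x $ Y1 = x $ Y1" by simp
        then show False using NP_zo[of x A Y1] x unfolding R_def by auto
      qed
    qed
    show "\<forall>x\<in>R. swp x \<noteq> x"
    proof
      fix x assume x: "x \<in> R"
      show "swp x \<noteq> x"
      proof
        assume "swp x = x" then have "swp x $ Y1 = x $ Y1" by simp
        then show False using NP_zo[of x A Y1] NP_zo[of x A Y2] x unfolding R_def by auto
      qed
    qed
    show "\<forall>x\<in>R. kap (swp x) \<noteq> x"
    proof
      fix x assume x: "x \<in> R"
      show "kap (swp x) \<noteq> x"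
      proof
        assume "kap (swp x) = x" then have "kap (swp x) $ X undefined = x $ X undefined" by simp
        then show False using NP_zo[of x A "X undefined"] x unfolding R_def by auto
      qed
    qed
  qed
qed

lemma edge_aux:
  fixes au av bu bv wu wv su sv :: real
  assumes "au = 0 \<or> au = 1" "av = 0 \<or> av = 1" "bu = 0 \<or> bu = 1" "bv = 0 \<or> bv = 1"
    "wu = 0 \<or> wu = 1" "wv = 0 \<or> wv = 1"
    "su - au = 0 \<or> su - au = 1" "sv - av = 0 \<or> sv - av = 1"
    "su - bu = 0 \<or> su - bu = 1" "sv - bv = 0 \<or> sv - bv = 1"
    "su - wu = 0 \<or> su - wu = 1" "sv - wv = 0 \<or> sv - wv = 1"
    "au + av \<le> 1" "bu + bv \<le> 1" "wu + wv \<le> 1"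
    "(su - au) + (sv - av) \<le> 1" "(su - bu) + (sv - bv) \<le> 1" "(su - wu) + (sv - wv) \<le> 1"
  shows "(if au = bu then wu else 1 - wu) + (if av = bv then wv else 1 - wv) \<le> 1"
  using assms by simp smt


theorem theorem2:
  fixes A :: "real^('n::{finite,linorder})^('m::finite)"
    and E :: "'v::finite \<Rightarrow> 'v \<Rightarrow> bool"
  assumes "three_ones A"
    and "card (NPadj A) > 2"
    and "simple_graph E"
  shows "\<not> aff_red (NPadj A) (Stable E)"
proof
  assume "aff_red (NPadj A) (Stable E)"
  then obtain L d where L: "linear L"
    and inj: "inj_on (\<lambda>x. L x + d) (convex hull NPadj A)"
    and face: "((\<lambda>x. L x + d) ` (convex hull NPadj A)) face_of (convex hull Stable E)"
    unfolding aff_red_def by blast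
  define N where "N = NPadj A"
  define f where "f = (\<lambda>x. L x + d)"
  define F where "F = f ` (convex hull N)"
  define W where "W = f ` N"
  define R where "R = {v \<in> N. v$Y1 + v$Y2 = 1}"
  have cardN: "card N = card R + 2" "4 dvd card R" "finite N"
    using card_NP[OF assms(1)] unfolding N_def R_def by auto
  have Nzo: "\<forall>x\<in>N. \<forall>i. x$i \<in> {0,1}" unfolding N_def NPadj_def by auto
  have Szo: "\<forall>x\<in>Stable E. \<forall>i. x$i \<in> {0,1}" unfolding Stable_def by auto
  have faceF: "F face_of convex hull Stable E" using face unfolding F_def f_def N_def .
  have injf: "inj_on f (convex hull N)" using inj unfolding f_def N_def .
  have injf': "inj_on (\<lambda>x. L x + d) (convex hull N)" using inj unfolding N_def .
  have cvx: "convex (convex hull N)" by simp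
  have WS: "f v \<in> Stable E" if "v \<in> N" for v
  proof -
    have e: "v extreme_point_of convex hull N" using zo_extreme[OF Nzo that] .
    have "(L v + d) extreme_point_of ((\<lambda>x. L x + d) ` (convex hull N))"
      using aff_ext[OF L injf' cvx hull_inc[OF that]] e by blast
    then have "f v extreme_point_of F" unfolding F_def f_def by simp
    then have "f v extreme_point_of convex hull Stable E"
      using extreme_point_of_face[OF faceF] by blast
    then show ?thesis by (rule extreme_point_of_convex_hull)
  qed
  have SW: "z \<in> W" if zS: "z \<in> Stable E" and zF: "z \<in> F" for z
  proof -
    have "z extreme_point_of convex hull Stable E" using zo_extreme[OF Szo that(1)] .
    then have ez: "z extreme_point_of F" using extreme_point_of_face[OF faceF] that(2) by blast
    obtain p where p: "p \<in> convex hull N" "z = L p + d" using zF unfolding F_def f_def by blast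
    have "(L p + d) extreme_point_of ((\<lambda>x. L x + d) ` (convex hull N))"
      using ez p(2) unfolding F_def f_def by simp
    then have "p extreme_point_of convex hull N" using aff_ext[OF L injf' cvx p(1)] by blast
    then have "p \<in> N" by (rule extreme_point_of_convex_hull)
    then show ?thesis using p(2) unfolding W_def f_def by blast
  qed
  have p0N: "p0 \<in> N" unfolding N_def by (rule p0_NP)
  have kapN: "v \<in> N \<Longrightarrow> kap v \<in> N" for v unfolding N_def by (rule kap_NP)
  define h0 :: "real^('n npc)" where "h0 = (\<chi> i. 1/2)"
  have h0eq: "h0 = (1/2) *\<^sub>R p0 + (1/2) *\<^sub>R kap p0"
    unfolding h0_def vec_eq_iff by (simp add: field_simps)
  have h0N: "h0 \<in> convex hull N"
    unfolding h0eq
    by (rule convexD[OF convex_convex_hull hull_inc[OF p0N] hull_inc[OF kapN[OF p0N]]]) auto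
  define c where "c = f h0"
  have cF: "c \<in> F" unfolding c_def F_def using h0N by blast
  have kapeq: "kap v = 2 *\<^sub>R h0 - v" for v :: "real^('n npc)"
    unfolding h0_def vec_eq_iff by simp
  have fkap: "f (kap v) = 2 *\<^sub>R c - f v" for v
  proof -
    have "f (kap v) = (L h0 + L h0 - L v) + d"
      unfolding kapeq f_def by (simp only: linear_diff[OF L] linear_scale[OF L] scaleR_2 linear_add[OF L])
    also have "\<dots> = (L h0 + d) + (L h0 + d) - (L v + d)" by (simp add: algebra_simps)
    also have "\<dots> = 2 *\<^sub>R c - f v" unfolding c_def f_def by (simp only: scaleR_2)
    finally show ?thesis .
  qed
  define kw where "kw w = 2 *\<^sub>R c - w" for w :: "real^'v"
  have kw_nth: "kw w $ i = 2 * c$i - w$i" for w i by (simp add: kw_def)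
  have kwW: "kw w \<in> W" if "w \<in> W" for w
  proof -
    from that obtain v where v: "v \<in> N" "w = f v" unfolding W_def by blast
    then have "kw w = f (kap v)" using fkap kw_def by simp
    then show ?thesis using kapN[OF v(1)] unfolding W_def by blast
  qed
  have WSt: "w \<in> Stable E" if "w \<in> W" for w using that WS unfolding W_def by blast
  have Wzo: "w$i = 0 \<or> w$i = 1" if "w \<in> W" for w i
    using WSt[OF that] unfolding Stable_def by auto
  have Wk: "2 * c$i - w$i = 0 \<or> 2 * c$i - w$i = 1" if "w \<in> W" for w i
    using Wzo[OF kwW[OF that], of i] kw_nth by simp
  have Wedge: "w$u + w$v \<le> 1" if "w \<in> W" "E u v" for w u v
    using WSt[OF that(1)] that(2) unfolding Stable_def by auto
  have Wedge2: "(2 * c$u - w$u) + (2 * c$v - w$v) \<le> 1" if "w \<in> W" "E u v" for w u v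
    using Wedge[OF kwW[OF that(1)] that(2)] kw_nth by simp
  have "R \<noteq> {}"
  proof
    assume "R = {}" then show False using cardN(1) assms(2) unfolding N_def by simp
  qed
  then obtain q where q: "q \<in> R" by blast
  have qN: "q \<in> N" using q unfolding R_def by simp
  define a where "a = f p0"
  define b where "b = f q"
  have aW: "a \<in> W" unfolding a_def W_def using p0N by blast
  have bW: "b \<in> W" unfolding b_def W_def using qN by blast
  have finj: "x = y" if "x \<in> N" "y \<in> N" "f x = f y" for x y
    using inj_onD[OF injf that(3) hull_inc[OF that(1)] hull_inc[OF that(2)]] .
  have "p0 \<noteq> q" using q unfolding R_def by auto
  then have ab_ne: "a \<noteq> b" unfolding a_def b_def using finj p0N qN by blast
  have key2: "2 * c$i = 1" if "a$i \<noteq> b$i" for i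
    using Wzo[OF aW, of i] Wzo[OF bW, of i] Wk[OF aW, of i] Wk[OF bW, of i] that by auto
  define psi where "psi w = (\<chi> i. if a$i = b$i then w$i else 1 - w$i)" for w :: "real^'v"
  have psi_nth: "psi w $ i = (if a$i = b$i then w$i else 1 - w$i)" for w i
    by (simp add: psi_def)
  have psiS: "psi w \<in> Stable E" if w: "w \<in> W" for w
    unfolding Stable_def
  proof (intro CollectI conjI allI impI)
    fix i show "psi w $ i \<in> {0,1}" using Wzo[OF w, of i] by (auto simp: psi_nth)
  next
    fix u v assume e: "E u v"
    show "psi w $ u + psi w $ v \<le> 1"
      unfolding psi_nth
      by (rule edge_aux[OF Wzo[OF aW, of u] Wzo[OF aW, of v] Wzo[OF bW, of u] Wzo[OF bW, of v]
          Wzo[OF w, of u] Wzo[OF w, of v] Wk[OF aW, of u] Wk[OF aW, of v] Wk[OF bW, of u] Wk[OF bW, of v]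
          Wk[OF w, of u] Wk[OF w, of v]
          Wedge[OF aW e] Wedge[OF bW e] Wedge[OF w e] Wedge2[OF aW e] Wedge2[OF bW e] Wedge2[OF w e]])
  qed
  have kwpsi: "kw (psi w) = psi (kw w)" for w
    unfolding vec_eq_iff
  proof
    fix i show "kw (psi w) $ i = psi (kw w) $ i"
      using key2[of i] by (auto simp: kw_nth psi_nth)
  qed
  have psiW: "psi w \<in> W" if w: "w \<in> W" for w
  proof -
    define x where "x = psi w"
    define y where "y = kw x"
    have xS: "x \<in> Stable E" unfolding x_def using psiS[OF w] .
    have yS: "y \<in> Stable E" unfolding y_def x_def kwpsi using psiS[OF kwW[OF w]] .
    have cxy: "c = (1 - 1/2) *\<^sub>R x + (1/2) *\<^sub>R y" unfolding y_def kw_def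
      by (simp add: algebra_simps)
    have "x \<in> F"
    proof (cases "x = y")
      case True
      then have "c = ((1 - 1/2) + 1/2) *\<^sub>R x" using cxy by (simp only: scaleR_left_distrib)
      then have "x = c" by simp
      then show ?thesis using cF by simp
    next
      case False
      then have "c \<in> open_segment x y" unfolding in_segment using cxy
        by (intro conjI exI[of _ "1/2"]) auto
      then show ?thesis using face_ofD[OF faceF _ hull_inc[OF xS] hull_inc[OF yS] cF] by blast
    qed
    then show ?thesis using SW xS unfolding x_def by blast
  qed
  obtain i0 where i0: "a$i0 \<noteq> b$i0" using ab_ne unfolding vec_eq_iff by blast
  have "\<exists>j. a$j = b$j \<and> 2 * c$j = 1"
  proof (rule ccontr)
    assume H: "\<not> (\<exists>j. a$j = b$j \<and> 2 * c$j = 1)"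
    have "b = kw a" unfolding vec_eq_iff
    proof
      fix j show "b$j = kw a $ j"
      proof (cases "a$j = b$j")
        case True
        then have "2 * c$j \<noteq> 1" using H by blast
        then show ?thesis using True Wzo[OF aW, of j] Wk[OF aW, of j] by (auto simp: kw_nth)
      next
        case False
        then show ?thesis using key2[OF False] Wzo[OF aW, of j] Wzo[OF bW, of j] by (auto simp: kw_nth)
      qed
    qed
    then have "f q = f (kap p0)" unfolding b_def a_def kw_def using fkap by simp
    then have "q = kap p0" using finj qN kapN[OF p0N] by blast
    then show False using q unfolding R_def by simp
  qed
  then obtain j0 where j0: "a$j0 = b$j0" "2 * c$j0 = 1" by blast
  have finW: "finite W" unfolding W_def using cardN(3) by simp
  have "4 dvd card W"
  proof (rule four_dvd[where g = kw and h = psi])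
    show "finite W" by fact
    show "\<forall>x\<in>W. kw x \<in> W" using kwW by blast
    show "\<forall>x\<in>W. psi x \<in> W" using psiW by blast
    show "\<forall>x\<in>W. kw (kw x) = x" by (simp add: kw_def)
    show "\<forall>x\<in>W. psi (psi x) = x" by (simp add: vec_eq_iff psi_nth)
    show "\<forall>x\<in>W. kw (psi x) = psi (kw x)" using kwpsi by blast
    show "\<forall>x\<in>W. kw x \<noteq> x"
    proof
      fix x assume x: "x \<in> W"
      show "kw x \<noteq> x"
      proof
        assume "kw x = x" then have "kw x $ i0 = x $ i0" by simp
        then show False using key2[OF i0] Wzo[OF x, of i0] by (auto simp: kw_nth)
      qed
    qed
    show "\<forall>x\<in>W. psi x \<noteq> x"
    proof
      fix x assume x: "x \<in> W"
      show "psi x \<noteq> x"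
      proof
        assume "psi x = x" then have "psi x $ i0 = x $ i0" by simp
        then show False using i0 Wzo[OF x, of i0] by (auto simp: psi_nth)
      qed
    qed
    show "\<forall>x\<in>W. kw (psi x) \<noteq> x"
    proof
      fix x assume x: "x \<in> W"
      show "kw (psi x) \<noteq> x"
      proof
        assume "kw (psi x) = x" then have "kw (psi x) $ j0 = x $ j0" by simp
        then show False using j0 Wzo[OF x, of j0] by (auto simp: kw_nth psi_nth)
      qed
    qed
  qed
  moreover have "card W = card N"
    unfolding W_def using card_image[OF inj_on_subset[OF injf hull_subset]] .
  ultimately have "4 dvd card R + 2" using cardN(1) by simp
  then show False using cardN(2) by presburger
qed

end
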